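(* Let $G$ be a strongly connected unweighted digraph without loops, let $H$ be its undirectization, let $0<\tau\le1$, and let $M_\tau(t)=I-At+(D-\tau I)\tau t^2+(A-S)\tau^2t^3$. If $H$ has at least two cycles, then $M_\tau(t)$ has at least one real eigenvalue in the open interval $(0,1/\tau)$.
   Context: $G=(V,E)$ with adjacency matrix $A$, $S=A\circ A^T$, $D=\mathrm{diag}(\mathrm{diag}(A^2))$. The undirectization $H$ is the undirected simple graph with edge $\{i,j\}$ whenever $(i,j)\in E$ or $(j,i)\in E$; a cycle is a closed path of length $\ge3$ up to cyclic permutations and reversal. Eigenvalues of $M_\tau(t)$ are roots of $\det M_\tau(t)$. Strongly connected: every vertex reachable from every other by a directed walk. *)

theory Defs
  imports "HOL-Analysis.Analysis"
begin

definition adj_matrix :: "('n::finite \<Rightarrow> 'n \<Rightarrow> bool) \<Rightarrow> real^'n^'n" where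
  "adj_matrix E = (\<chi> i j. if E i j then 1 else 0)"

text \<open>S = A o A^T (Hadamard product).\<close>
definition sym_part :: "real^'n^'n \<Rightarrow> real^'n^'n" where
  "sym_part A = (\<chi> i j. A $ i $ j * A $ j $ i)"

text \<open>D = diag(diag(A^2)).\<close>
definition diag_sq :: "real^'n^'n \<Rightarrow> real^'n::finite^'n" where
  "diag_sq A = (\<chi> i j. if i = j then (A ** A) $ i $ i else 0)"

definition M_tau :: "real^'n^'n \<Rightarrow> real \<Rightarrow> real \<Rightarrow> real^'n::finite^'n" where
  "M_tau A \<tau> t = mat 1 - t *\<^sub>R A + (\<tau> * t^2) *\<^sub>R (diag_sq A - \<tau> *\<^sub>R mat 1)
                  + (\<tau>^2 * t^3) *\<^sub>R (A - sym_part A)"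

definition strongly_connected :: "('n \<Rightarrow> 'n \<Rightarrow> bool) \<Rightarrow> bool" where
  "strongly_connected E \<longleftrightarrow> (\<forall>u v. E\<^sup>*\<^sup>* u v)"

definition und_adj :: "('n \<Rightarrow> 'n \<Rightarrow> bool) \<Rightarrow> 'n \<Rightarrow> 'n \<Rightarrow> bool" where
  "und_adj E u v \<longleftrightarrow> u \<noteq> v \<and> (E u v \<or> E v u)"

definition is_cycle :: "('n \<Rightarrow> 'n \<Rightarrow> bool) \<Rightarrow> 'n list \<Rightarrow> bool" where
  "is_cycle E cs \<longleftrightarrow> length cs \<ge> 3 \<and> distinct cs \<and>
     (\<forall>i < length cs. und_adj E (cs ! i) (cs ! ((i + 1) mod length cs)))"

definition cycle_equiv :: "'n list \<Rightarrow> 'n list \<Rightarrow> bool" where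
  "cycle_equiv cs ds \<longleftrightarrow> (\<exists>k. ds = rotate k cs \<or> ds = rev (rotate k cs))"

definition at_least_two_cycles :: "('n \<Rightarrow> 'n \<Rightarrow> bool) \<Rightarrow> bool" where
  "at_least_two_cycles E \<longleftrightarrow>
     (\<exists>c1 c2. is_cycle E c1 \<and> is_cycle E c2 \<and> \<not> cycle_equiv c1 c2)"

end

theory Submission
  imports Defs
begin

definition Wm :: "('n::finite \<Rightarrow> 'n \<Rightarrow> bool) \<Rightarrow> real \<Rightarrow> real^('n\<times>'n)^('n\<times>'n)" where
 "Wm E \<tau> = (\<chi> a b. if E (fst a) (snd a) \<and> E (fst b) (snd b) \<and> snd a = fst b
                     then (if snd b = fst a then 1 - \<tau> else 1) else 0)"

lemma det_zero_if_kernel: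
  fixes M :: "real^'n::finite^'n"
  assumes "M *v x = 0" "x \<noteq> 0" shows "det M = 0"
proof (rule ccontr)
  assume "det M \<noteq> 0"
  then have "invertible M" by (simp add: invertible_det_nz)
  then obtain B where "B ** M = mat 1" unfolding invertible_def by blast
  then have "x = B *v (M *v x)" by (simp add: matrix_vector_mul_assoc)
  with assms show False by simp
qed

lemma Wz_row:
  fixes E :: "'n::finite \<Rightarrow> 'n \<Rightarrow> bool"
  shows "(Wm E \<tau> *v z) $ (v,w) = (if E v w then (\<Sum>u\<in>UNIV. if E w u then (if u = v then 1 - \<tau> else 1) * z$(w,u) else 0) else 0)"
proof -
  have "(Wm E \<tau> *v z) $ (v,w) = (\<Sum>b\<in>UNIV. Wm E \<tau> $ (v,w) $ b * z $ b)"
    by (simp add: matrix_vector_mult_def)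
  also have "\<dots> = (\<Sum>a\<in>UNIV. \<Sum>u\<in>UNIV. Wm E \<tau> $ (v,w) $ (a,u) * z $ (a,u))"
    by (simp add: sum.cartesian_product UNIV_Times_UNIV[symmetric] del: UNIV_Times_UNIV)
  also have "\<dots> = (\<Sum>u\<in>UNIV. Wm E \<tau> $ (v,w) $ (w,u) * z $ (w,u))"
    by (subst sum.remove[of UNIV w]) (auto simp: Wm_def intro!: sum.neutral)
  also have "\<dots> = (if E v w then (\<Sum>u\<in>UNIV. if E w u then (if u = v then 1 - \<tau> else 1) * z$(w,u) else 0) else 0)"
    by (auto simp: Wm_def intro!: sum.cong)
  finally show ?thesis .
qed

lemma Mtau_row:
  fixes E :: "'n::finite \<Rightarrow> 'n \<Rightarrow> bool"
  shows "(M_tau (adj_matrix E) \<tau> t *v x)$v = x$v - t*(\<Sum>w\<in>UNIV. if E v w then x$w else 0)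
     + \<tau>*t^2*((\<Sum>w\<in>UNIV. if E v w \<and> E w v then 1 else 0) - \<tau>)*x$v
     + \<tau>^2*t^3*(\<Sum>w\<in>UNIV. if E v w \<and> \<not> E w v then x$w else 0)"
proof -
  let ?A = "adj_matrix E"
  have e: "M_tau ?A \<tau> t $ v $ w = (if v = w then 1 else 0) - t * (if E v w then 1 else 0)
      + \<tau>*t^2 * ((if v = w then (\<Sum>k\<in>UNIV. if E v k \<and> E k v then 1 else 0) else 0) - (if v = w then \<tau> else 0))
      + \<tau>^2*t^3 * (if E v w \<and> \<not> E w v then 1 else 0)" for w
    by (simp add: M_tau_def diag_sq_def sym_part_def adj_matrix_def matrix_matrix_mult_def mat_def
         if_distrib[of "\<lambda>x. x * _"] cong: if_cong)
       (auto intro!: sum.cong)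
  have "(M_tau ?A \<tau> t *v x)$v = (\<Sum>w\<in>UNIV. M_tau ?A \<tau> t $ v $ w * x$w)"
    by (simp add: matrix_vector_mult_def)
  also have "\<dots> = (\<Sum>w\<in>UNIV. (if v = w then x$w else 0) - t * (if E v w then x$w else 0)
      + \<tau>*t^2 * ((if v = w then (\<Sum>k\<in>UNIV. if E v k \<and> E k v then 1 else 0) * x$w else 0) - (if v = w then \<tau> * x$w else 0))
      + \<tau>^2*t^3 * (if E v w \<and> \<not> E w v then x$w else 0))"
    by (rule sum.cong) (auto simp: e algebra_simps)
  also have "\<dots> = x$v - t*(\<Sum>w\<in>UNIV. if E v w then x$w else 0)
     + \<tau>*t^2*((\<Sum>w\<in>UNIV. if E v w \<and> E w v then 1 else 0) - \<tau>)*x$v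
     + \<tau>^2*t^3*(\<Sum>w\<in>UNIV. if E v w \<and> \<not> E w v then x$w else 0)"
    by (simp add: sum.distrib sum_subtractf sum_distrib_left[symmetric] algebra_simps)
  finally show ?thesis .
qed
lemma e2k:
  fixes E :: "'n::finite \<Rightarrow> 'n \<Rightarrow> bool"
  assumes eig: "Wm E \<tau> *v z = \<mu> *\<^sub>R z" and z0: "z \<noteq> 0" and tau: "0 < \<tau>" "\<tau> < \<mu>"
  shows "det (M_tau (adj_matrix E) \<tau> (1/\<mu>)) = 0"
proof -
  define t where "t = 1/\<mu>"
  have lam: "\<mu> > 0" using tau by simp
  have t0: "t > 0" "t * \<mu> = 1" "\<tau> * t < 1" using tau by (auto simp: t_def field_simps)
  have tt: "1 - \<tau>^2 * t^2 > 0"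
  proof -
    have "(\<tau>*t)^2 < 1" using t0 tau by (simp add: power_less_one_iff abs_less_iff power_strict_mono) 
    then show ?thesis by (simp add: power_mult_distrib)
  qed
  define x where "x = (\<chi> v. \<Sum>w\<in>UNIV. z $ (v,w))"
  have row: "\<mu> * z$(v,w) = (if E v w then (\<Sum>u\<in>UNIV. if E w u then (if u = v then 1 - \<tau> else 1) * z$(w,u) else 0) else 0)" for v w
    using arg_cong[OF eig, of "\<lambda>y. y $ (v,w)"] by (simp add: Wz_row)
  have zero: "\<not> E v w \<Longrightarrow> z$(v,w) = 0" for v w using row[of v w] lam by simp
  have xw: "x$w = (\<Sum>u\<in>UNIV. if E w u then z$(w,u) else 0)" for w
    unfolding x_def by (auto intro!: sum.cong simp: zero)
  have arc: "\<mu> * z$(v,w) = x$w - (if E w v then \<tau> * z$(w,v) else 0)" if "E v w" for v w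
  proof -
    have "(\<Sum>u\<in>UNIV. if E w u then (if u = v then 1 - \<tau> else 1) * z$(w,u) else 0)
        = (\<Sum>u\<in>UNIV. (if E w u then z$(w,u) else 0) - (if u = v then (if E w v then \<tau> * z$(w,v) else 0) else 0))"
      by (rule sum.cong) (auto simp: algebra_simps)
    also have "\<dots> = x$w - (if E w v then \<tau> * z$(w,v) else 0)"
      by (simp add: sum_subtractf xw)
    finally show ?thesis using row[of v w] that by simp
  qed
  have br: "(1 - \<tau>^2*t^2) * z$(v,w) - t * x$w + (if E w v then \<tau>*t^2 * x$v else \<tau>^2*t^3*x$w) = 0"
    if "E v w" for v w
  proof (cases "E w v")
    case True
    have a1: "z$(v,w) = t * x$w - \<tau> * t * z$(w,v)"
      using arc[OF that] True t0 by (simp add: t_def field_simps)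
    have a2: "z$(w,v) = t * x$v - \<tau> * t * z$(v,w)"
      using arc[OF True] that t0 by (simp add: t_def field_simps)
    have "(1 - \<tau>^2*t^2) * z$(v,w) = t * x$w - \<tau>*t^2 * x$v"
      using a1 a2 by (simp add: algebra_simps power2_eq_square)
    then show ?thesis using True by simp
  next
    case False
    have "z$(v,w) = t * x$w" using arc[OF that] False t0 by (simp add: t_def field_simps)
    then show ?thesis using False by (simp add: algebra_simps power2_eq_square power3_eq_cube)
  qed
  have "(M_tau (adj_matrix E) \<tau> t *v x)$v = 0" for v
  proof -
    have xv: "x$v = (\<Sum>w\<in>UNIV. if E v w then z$(v,w) else 0)" by (rule xw)
    have "0 = (\<Sum>w\<in>UNIV. if E v w then (1 - \<tau>^2*t^2) * z$(v,w) - t * x$w + (if E w v then \<tau>*t^2 * x$v else \<tau>^2*t^3*x$w) else 0)"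
      by (rule sum.neutral[symmetric]) (auto simp: br)
    also have "\<dots> = (\<Sum>w\<in>UNIV. (1-\<tau>^2*t^2) * (if E v w then z$(v,w) else 0) - t*(if E v w then x$w else 0)
         + \<tau>*t^2 * (if E v w \<and> E w v then 1 else 0) * x$v + \<tau>^2*t^3 * (if E v w \<and> \<not> E w v then x$w else 0))"
      by (rule sum.cong) auto
    also have "\<dots> = (1 - \<tau>^2*t^2) * (\<Sum>w\<in>UNIV. if E v w then z$(v,w) else 0) - t*(\<Sum>w\<in>UNIV. if E v w then x$w else 0)
         + \<tau>*t^2 * (\<Sum>w\<in>UNIV. if E v w \<and> E w v then 1 else 0) * x$v
         + \<tau>^2*t^3*(\<Sum>w\<in>UNIV. if E v w \<and> \<not> E w v then x$w else 0)"
      by (simp add: sum.distrib sum_subtractf sum_distrib_left sum_distrib_right)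
    also have "\<dots> = (M_tau (adj_matrix E) \<tau> t *v x)$v"
      by (simp add: Mtau_row xv[symmetric] algebra_simps power2_eq_square)
    finally show ?thesis by simp
  qed
  then have Mx: "M_tau (adj_matrix E) \<tau> t *v x = 0" by (simp add: vec_eq_iff)
  have "x \<noteq> 0"
  proof
    assume x0: "x = 0"
    have "z$p = 0" for p
    proof -
      obtain v w where p: "p = (v,w)" by (cases p)
      show ?thesis
      proof (cases "E v w")
        case False then show ?thesis using zero p by simp
      next
        case True
        from br[OF True] x0 have "(1 - \<tau>^2*t^2) * z$(v,w) = 0" by (simp split: if_splits)
        then show ?thesis using tt p by simp
      qed
    qed
    then show False using z0 by (simp add: vec_eq_iff)
  qed
  with Mx show ?thesis unfolding t_def by (rule det_zero_if_kernel)
qed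

lemma mv_nonneg:
  fixes W :: "real^'a::finite^'a"
  assumes "\<forall>i j. W$i$j \<ge> 0" "\<forall>i. z$i \<ge> 0" shows "(W *v z)$i \<ge> 0"
  using assms by (simp add: matrix_vector_mult_def sum_nonneg)

lemma mv_mono:
  fixes W :: "real^'a::finite^'a"
  assumes "\<forall>i j. W$i$j \<ge> 0" "\<forall>i. z$i \<le> z'$i" shows "(W *v z)$i \<le> (W *v z')$i"
  using assms by (simp add: matrix_vector_mult_def sum_mono mult_left_mono)

lemma brouwer_eig:
  fixes W :: "real^'a::finite^'a"
  assumes nn: "\<forall>i j. W$i$j \<ge> 0" and y0: "\<forall>i. y$i \<ge> 0" "y \<noteq> 0" and c: "c > 0"
    and Wy: "\<forall>i. c * y$i \<le> (W *v y)$i"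
  shows "\<exists>z \<mu>. z \<noteq> 0 \<and> W *v z = \<mu> *\<^sub>R z \<and> \<mu> \<ge> c"
proof -
  define s where "s = (\<lambda>z::real^'a. \<Sum>i\<in>UNIV. z$i)"
  define S where "S = {z::real^'a. (\<forall>i. 0 \<le> z$i) \<and> s z = 1 \<and> (\<forall>i. c * z$i \<le> (W *v z)$i)}"
  define f where "f = (\<lambda>z. inverse (s (W *v z)) *\<^sub>R (W *v z))"
  have sW: "s (W *v z) \<ge> c" if "z \<in> S" for z
  proof -
    have "c = c * s z" using that by (simp add: S_def)
    also have "\<dots> = (\<Sum>i\<in>UNIV. c * z$i)" by (simp add: s_def sum_distrib_left)
    also have "\<dots> \<le> s (W *v z)" unfolding s_def using that by (intro sum_mono) (simp add: S_def)
    finally show ?thesis .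
  qed
  have s_scale: "s (a *\<^sub>R z) = a * s z" for a z by (simp add: s_def sum_distrib_left)
  have fS: "f z \<in> S" if zS: "z \<in> S" for z
  proof -
    have pos: "s (W *v z) > 0" using sW[OF zS] c by simp
    have znn: "\<forall>i. 0 \<le> z$i" using zS by (simp add: S_def)
    have Wnn: "\<forall>i. 0 \<le> (W *v z)$i" using mv_nonneg[OF nn znn] by blast
    have "(\<forall>i. 0 \<le> f z $ i)" using Wnn pos by (simp add: f_def)
    moreover have "s (f z) = 1" using pos by (simp add: f_def s_scale)
    moreover have "c * f z $ i \<le> (W *v f z) $ i" for i
    proof -
      have "(W *v (c *\<^sub>R z))$i \<le> (W *v (W *v z))$i"
        using zS by (intro mv_mono[OF nn]) (simp add: S_def)
      then have "c * (W *v z)$i \<le> (W *v (W *v z))$i"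
        by (simp add: matrix_vector_mult_scaleR)
      then have "inverse (s (W *v z)) * (c * (W *v z)$i) \<le> inverse (s (W *v z)) * (W *v (W *v z))$i"
        using pos by (intro mult_left_mono) auto
      then show ?thesis
        by (simp add: f_def matrix_vector_mult_scaleR algebra_simps)
    qed
    ultimately show ?thesis by (simp add: S_def)
  qed
  have sy: "s y > 0"
  proof -
    obtain k where "y$k \<noteq> 0" using y0 by (auto simp: vec_eq_iff)
    then have "y$k > 0" using y0 by (metis order_le_less)
    moreover have "y$k \<le> s y" unfolding s_def
      using y0 by (intro member_le_sum) auto
    ultimately show ?thesis by simp
  qed
  have ne: "S \<noteq> {}"
  proof -
    have "c * (inverse (s y) * y $ i) \<le> (W *v (inverse (s y) *\<^sub>R y)) $ i" for i
    proof -
      have "inverse (s y) * (c * y $ i) \<le> inverse (s y) * (W *v y) $ i"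
        using Wy sy by (intro mult_left_mono) auto
      then show ?thesis by (simp add: matrix_vector_mult_scaleR algebra_simps)
    qed
    then have "inverse (s y) *\<^sub>R y \<in> S"
      using y0 sy by (simp add: S_def s_scale)
    then show ?thesis by blast
  qed
  have cont_s: "continuous_on A s" for A unfolding s_def
    by (intro continuous_on_sum continuous_on_component[OF continuous_on_id])
  have cl: "closed S"
  proof -
    have eq: "S = {z. \<forall>i. 0 \<le> z$i} \<inter> {z. s z = 1} \<inter> {z. \<forall>i. c * z$i \<le> (W *v z)$i}"
      by (auto simp: S_def)
    have c1: "closed {z::real^'a. \<forall>i. 0 \<le> z$i}"
      by (rule closed_Collect_all) (rule closed_halfspace_component_ge_cart)
    have c2: "closed {z. s z = 1}"
      by (rule closed_Collect_eq[OF cont_s continuous_on_const])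
    have c3: "closed {z. \<forall>i. c * z$i \<le> (W *v z)$i}"
      by (rule closed_Collect_all, rule closed_Collect_le[OF continuous_on_mult[OF continuous_on_const continuous_on_component[OF continuous_on_id]]
           continuous_on_component[OF matrix_vector_mult_linear_continuous_on]])
    show ?thesis unfolding eq by (intro closed_Int c1 c2 c3)
  qed
  have bd: "S \<subseteq> cbox 0 (\<chi> i. 1)"
  proof
    fix z assume zS: "z \<in> S"
    have "z$i \<le> 1" for i
    proof -
      have "z$i \<le> s z" unfolding s_def using zS by (intro member_le_sum) (auto simp: S_def)
      then show ?thesis using zS by (simp add: S_def)
    qed
    then show "z \<in> cbox 0 (\<chi> i. 1)" using zS by (simp add: mem_box_cart S_def)
  qed
  have cpt: "compact S"
  proof -
    have "compact (cbox 0 (\<chi> i. 1) \<inter> S)" by (rule compact_Int_closed[OF compact_cbox cl])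
    moreover have "cbox 0 (\<chi> i. 1) \<inter> S = S" using bd by blast
    ultimately show ?thesis by simp
  qed
  have cvx: "convex S"
    unfolding convex_def
  proof (intro ballI allI impI)
    fix x y :: "real^'a" and u v :: real
    assume xy: "x \<in> S" "y \<in> S" and uv: "0 \<le> u" "0 \<le> v" "u + v = 1"
    have "\<forall>i. 0 \<le> (u *\<^sub>R x + v *\<^sub>R y)$i" using xy uv by (simp add: S_def)
    moreover have "s (u *\<^sub>R x + v *\<^sub>R y) = u * s x + v * s y"
      by (simp add: s_def sum.distrib sum_distrib_left)
    then have "s (u *\<^sub>R x + v *\<^sub>R y) = 1" using xy uv by (simp add: S_def)
    moreover have "c * (u *\<^sub>R x + v *\<^sub>R y)$i \<le> (W *v (u *\<^sub>R x + v *\<^sub>R y))$i" for i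
    proof -
      have "c * x$i \<le> (W *v x)$i" "c * y$i \<le> (W *v y)$i" using xy by (auto simp: S_def)
      then have "u * (c * x$i) + v * (c * y$i) \<le> u * (W *v x)$i + v * (W *v y)$i"
        using uv by (intro add_mono mult_left_mono) auto
      moreover have "W *v (u *\<^sub>R x + v *\<^sub>R y) = u *\<^sub>R (W *v x) + v *\<^sub>R (W *v y)"
        by (simp add: matrix_vector_right_distrib matrix_vector_mult_scaleR)
      ultimately show ?thesis by (simp add: algebra_simps)
    qed
    ultimately show "u *\<^sub>R x + v *\<^sub>R y \<in> S" by (simp add: S_def)
  qed
  have cf: "continuous_on S f"
  proof -
    have "continuous_on S (\<lambda>z. s (W *v z))"
      by (rule continuous_on_compose2[OF cont_s matrix_vector_mult_linear_continuous_on]) auto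
    moreover have "\<forall>z\<in>S. s (W *v z) \<noteq> 0" using sW c by force
    ultimately have "continuous_on S (\<lambda>z. inverse (s (W *v z)))"
      by (rule continuous_on_inverse)
    then show ?thesis unfolding f_def
      by (rule continuous_on_scaleR[OF _ matrix_vector_mult_linear_continuous_on])
  qed
  obtain z where zS: "z \<in> S" and fz: "f z = z"
    using brouwer[OF cpt cvx ne cf] fS by blast
  have pos: "s (W *v z) > 0" using sW[OF zS] c by simp
  have eig: "W *v z = s (W *v z) *\<^sub>R z"
  proof -
    have "s (W *v z) *\<^sub>R z = s (W *v z) *\<^sub>R f z" using fz by simp
    also have "\<dots> = W *v z" using pos by (simp add: f_def)
    finally show ?thesis by simp
  qed
  have "z \<noteq> 0" using zS by (auto simp: S_def s_def)
  then show ?thesis using eig sW[OF zS] by blast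
qed

primrec mpow :: "real^'a::finite^'a \<Rightarrow> nat \<Rightarrow> real^'a^'a" where
  "mpow W 0 = mat 1"
| "mpow W (Suc n) = W ** mpow W n"

lemma mpow_Suc_entry: "(W ** mpow W n)$x$y = (\<Sum>z\<in>UNIV. W$x$z * (mpow W n)$z$y)"
  by (simp add: matrix_matrix_mult_def)

lemma mpow_nonneg:
  assumes "\<forall>i j. W$i$j \<ge> 0" shows "(mpow W n)$i$j \<ge> 0"
proof (induction n arbitrary: i j)
  case 0 then show ?case by (simp add: mat_def)
next
  case (Suc n) then show ?case using assms by (simp add: mpow_Suc_entry sum_nonneg)
qed

lemma sum_ge_term:
  fixes f :: "'a::finite \<Rightarrow> real"
  assumes "\<forall>z. f z \<ge> 0" shows "f a \<le> (\<Sum>z\<in>UNIV. f z)"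
  using assms by (intro member_le_sum) auto

lemma sum_ge_two_terms:
  fixes f :: "'a::finite \<Rightarrow> real"
  assumes "\<forall>z. f z \<ge> 0" "a \<noteq> b" shows "f a + f b \<le> (\<Sum>z\<in>UNIV. f z)"
proof -
  have "f a + f b = (\<Sum>z\<in>{a,b}. f z)" using assms by simp
  also have "\<dots> \<le> (\<Sum>z\<in>UNIV. f z)" using assms by (intro sum_mono2) auto
  finally show ?thesis .
qed

lemma mpow_ge1:
  assumes nn: "\<forall>i j. W$i$j \<ge> 0" and ch: "\<forall>i<n. W$(\<alpha> i)$(\<alpha> (Suc i)) \<ge> 1"
  shows "(mpow W n)$(\<alpha> 0)$(\<alpha> n) \<ge> 1"
  using ch
proof (induction n arbitrary: \<alpha>)
  case 0 then show ?case by (simp add: mat_def)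
next
  case (Suc n)
  have ih: "(mpow W n)$(\<alpha> 1)$(\<alpha> (Suc n)) \<ge> 1"
    using Suc.IH[of "\<lambda>i. \<alpha> (Suc i)"] Suc.prems by simp
  have w: "W$(\<alpha> 0)$(\<alpha> 1) \<ge> 1" using Suc.prems by simp
  have "1 \<le> W$(\<alpha> 0)$(\<alpha> 1) * (mpow W n)$(\<alpha> 1)$(\<alpha> (Suc n))"
    using ih w mult_mono[of 1 "W$(\<alpha> 0)$(\<alpha> 1)" 1] by simp
  also have "\<dots> \<le> (\<Sum>z\<in>UNIV. W$(\<alpha> 0)$z * (mpow W n)$z$(\<alpha> (Suc n)))"
    by (rule sum_ge_term) (simp add: nn mpow_nonneg)
  finally show ?case by (simp add: mpow_Suc_entry)
qed

lemma mpow_ge2: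
  assumes nn: "\<forall>i j. W$i$j \<ge> 0" and cha: "\<forall>i<n. W$(\<alpha> i)$(\<alpha> (Suc i)) \<ge> 1"
    and chb: "\<forall>i<n. W$(\<beta> i)$(\<beta> (Suc i)) \<ge> 1"
    and st: "\<alpha> 0 = \<beta> 0" and en: "\<alpha> n = \<beta> n" and df: "\<exists>i\<le>n. \<alpha> i \<noteq> \<beta> i"
  shows "(mpow W n)$(\<alpha> 0)$(\<alpha> n) \<ge> 2"
  using cha chb st en df
proof (induction n arbitrary: \<alpha> \<beta>)
  case 0 then show ?case by auto
next
  case (Suc n)
  let ?f = "\<lambda>z. W$(\<alpha> 0)$z * (mpow W n)$z$(\<alpha> (Suc n))"
  have fnn: "\<forall>z. ?f z \<ge> 0" by (simp add: nn mpow_nonneg)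
  have wa: "W$(\<alpha> 0)$(\<alpha> 1) \<ge> 1" using Suc.prems(1)[rule_format, of 0] by simp
  have wb: "W$(\<alpha> 0)$(\<beta> 1) \<ge> 1" using Suc.prems(2)[rule_format, of 0] Suc.prems(3) by simp
  have ma: "(mpow W n)$(\<alpha> 1)$(\<alpha> (Suc n)) \<ge> 1"
    using mpow_ge1[OF nn, of n "\<lambda>i. \<alpha> (Suc i)"] Suc.prems by simp
  have mb: "(mpow W n)$(\<beta> 1)$(\<alpha> (Suc n)) \<ge> 1"
    using mpow_ge1[OF nn, of n "\<lambda>i. \<beta> (Suc i)"] Suc.prems by simp
  have one: "1 \<le> a * b" if "1 \<le> a" "1 \<le> b" for a b :: real
    using mult_mono[of 1 a 1 b] that by simp
  show ?case
  proof (cases "\<alpha> 1 = \<beta> 1")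
    case True
    have "(mpow W n)$(\<alpha> 1)$(\<alpha> (Suc n)) \<ge> 2"
    proof -
      have "\<exists>i\<le>n. \<alpha> (Suc i) \<noteq> \<beta> (Suc i)"
      proof -
        obtain i where i: "i \<le> Suc n" "\<alpha> i \<noteq> \<beta> i" using Suc.prems by blast
        then have "i \<noteq> 0" using Suc.prems(3) by (cases i) auto
        then show ?thesis using i by (intro exI[of _ "i - 1"]) auto
      qed
      then show ?thesis
        using Suc.IH[of "\<lambda>i. \<alpha> (Suc i)" "\<lambda>i. \<beta> (Suc i)"] Suc.prems True by simp
    qed
    then have "1 * 2 \<le> ?f (\<alpha> 1)" using wa
      by (intro mult_mono) auto
    then have "2 \<le> ?f (\<alpha> 1)" by simp
    also have "\<dots> \<le> (\<Sum>z\<in>UNIV. ?f z)" by (rule sum_ge_term[OF fnn])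
    finally show ?thesis by (simp add: mpow_Suc_entry)
  next
    case False
    have "2 \<le> ?f (\<alpha> 1) + ?f (\<beta> 1)" using one[OF wa ma] one[OF wb mb] by simp
    also have "\<dots> \<le> (\<Sum>z\<in>UNIV. ?f z)" by (rule sum_ge_two_terms[OF fnn False])
    finally show ?thesis by (simp add: mpow_Suc_entry)
  qed
qed

lemma eig_from_pow:
  fixes W :: "real^'a::finite^'a"
  assumes nn: "\<forall>i j. W$i$j \<ge> 0" and K: "K > 0" and d: "(mpow W K)$e$e \<ge> 2"
  shows "\<exists>z \<mu>. z \<noteq> 0 \<and> W *v z = \<mu> *\<^sub>R z \<and> \<mu> > 1"
proof -
  define c where "c = root K 2"
  have c1: "c > 1" unfolding c_def using K by simp
  have cK: "c ^ K = 2" unfolding c_def using K by (simp add: real_root_pow_pos)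
  define G where "G = (\<lambda>j k. (mpow W j)$k$e / c^j)"
  define y where "y = (\<chi> k. \<Sum>j<K. G j k)"
  have Gnn: "G j k \<ge> 0" for j k using c1 by (simp add: G_def mpow_nonneg[OF nn])
  have Wy: "(W *v y)$i = c * (\<Sum>j<K. G (Suc j) i)" for i
  proof -
    have "(W *v y)$i = (\<Sum>k\<in>UNIV. W$i$k * (\<Sum>j<K. G j k))"
      by (simp add: matrix_vector_mult_def y_def mult.commute)
    also have "\<dots> = (\<Sum>j<K. (\<Sum>k\<in>UNIV. W$i$k * (mpow W j)$k$e) / c^j)"
      by (simp add: sum_distrib_left sum_divide_distrib G_def sum.swap[of _ UNIV])
    also have "\<dots> = (\<Sum>j<K. c * G (Suc j) i)"
      using c1 by (intro sum.cong) (auto simp: G_def mpow_Suc_entry[symmetric] field_simps)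
    finally show ?thesis by (simp add: sum_distrib_left)
  qed
  have ineq: "c * y$i \<le> (W *v y)$i" for i
  proof -
    have tel: "(\<Sum>j<K. G (Suc j) i) - (\<Sum>j<K. G j i) = G K i - G 0 i"
      using sum_lessThan_telescope[of "\<lambda>j. G j i" K] by (simp add: sum_subtractf)
    have "G 0 i \<le> G K i"
    proof (cases "i = e")
      case True
      then show ?thesis using d cK by (simp add: G_def mat_def)
    next
      case False
      then show ?thesis using Gnn[of K i] by (simp add: G_def mat_def)
    qed
    then have "(\<Sum>j<K. G j i) \<le> (\<Sum>j<K. G (Suc j) i)" using tel by simp
    then have "c * (\<Sum>j<K. G j i) \<le> c * (\<Sum>j<K. G (Suc j) i)" using c1 by simp
    then show ?thesis unfolding Wy by (simp add: y_def)
  qed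
  have ynn: "\<forall>i. y$i \<ge> 0" by (simp add: y_def sum_nonneg Gnn)
  have "G 0 e \<le> (\<Sum>j<K. G j e)"
    by (rule member_le_sum) (use K Gnn in auto)
  then have "y$e \<ge> G 0 e" unfolding y_def by simp
  then have "y$e \<ge> 1" by (simp add: G_def mat_def)
  then have "y \<noteq> 0" by auto
  then obtain z \<mu> where "z \<noteq> 0" "W *v z = \<mu> *\<^sub>R z" "\<mu> \<ge> c"
    using brouwer_eig[OF nn ynn \<open>y \<noteq> 0\<close>, of c] ineq c1 by fastforce
  then show ?thesis using c1 by (intro exI[of _ z] exI[of _ \<mu>]) auto
qed

definition cwalk :: "('n \<Rightarrow> 'n \<Rightarrow> bool) \<Rightarrow> 'n list \<Rightarrow> bool" where
  "cwalk E vs \<longleftrightarrow> vs \<noteq> [] \<and> (\<forall>i<length vs. E (vs!i) (vs!(Suc i mod length vs)))"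

definition cnb :: "'n list \<Rightarrow> bool" where
  "cnb vs \<longleftrightarrow> (\<forall>i<length vs. vs!(Suc (Suc i) mod length vs) \<noteq> vs!i)"

lemma Wm_nonneg: "\<tau> \<le> 1 \<Longrightarrow> \<forall>i j. Wm E \<tau> $ i $ j \<ge> 0"
  by (simp add: Wm_def)

lemma cyc_to_pow:
  fixes E :: "'n::finite \<Rightarrow> 'n \<Rightarrow> bool"
  assumes tau: "\<tau> \<le> 1" and len: "length vs = length ws" "length vs \<ge> 2"
    and w: "cwalk E vs" "cwalk E ws" and nb: "cnb vs" "cnb ws"
    and st: "vs!0 = ws!0" "vs!1 = ws!1" and ne: "vs \<noteq> ws"
  shows "\<exists>e K. K > 0 \<and> (mpow (Wm E \<tau>) K)$e$e \<ge> 2"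
proof -
  define L where "L = length vs"
  have L: "L \<ge> 2" using len by (simp add: L_def)
  define \<alpha> where "\<alpha> = (\<lambda>i. (vs!(i mod L), vs!(Suc i mod L)))"
  define \<beta> where "\<beta> = (\<lambda>i. (ws!(i mod L), ws!(Suc i mod L)))"
  have chain: "Wm E \<tau> $ (xs!(i mod L), xs!(Suc i mod L)) $ (xs!(Suc i mod L), xs!(Suc (Suc i) mod L)) \<ge> 1"
    if "length xs = L" "cwalk E xs" "cnb xs" for xs i
  proof -
    have L0: "L > 0" using L by simp
    have e1: "E (xs!(i mod L)) (xs!(Suc i mod L))"
      using that(2) L0 unfolding cwalk_def that(1) by (metis mod_less_divisor mod_Suc_eq)
    have e2: "E (xs!(Suc i mod L)) (xs!(Suc (Suc i) mod L))"
      using that(2) L0 unfolding cwalk_def that(1) by (metis mod_less_divisor mod_Suc_eq)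
    have n: "xs!(Suc (Suc i) mod L) \<noteq> xs!(i mod L)"
      using that(3) L0 unfolding cnb_def that(1)
      by (metis mod_less_divisor mod_Suc_eq)
    show ?thesis using e1 e2 n by (simp add: Wm_def)
  qed
  have ca: "\<forall>i<L. Wm E \<tau> $ (\<alpha> i) $ (\<alpha> (Suc i)) \<ge> 1"
    unfolding \<alpha>_def by (intro allI impI chain) (auto simp: L_def w nb)
  have cb: "\<forall>i<L. Wm E \<tau> $ (\<beta> i) $ (\<beta> (Suc i)) \<ge> 1"
    unfolding \<beta>_def by (intro allI impI chain) (auto simp: L_def w nb len)
  have a0: "\<alpha> 0 = \<beta> 0" using st L by (simp add: \<alpha>_def \<beta>_def)
  have aL: "\<alpha> L = \<alpha> 0" "\<beta> L = \<beta> 0" using L by (simp_all add: \<alpha>_def \<beta>_def mod_Suc)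
  obtain i where i: "i < L" "vs!i \<noteq> ws!i" using ne len by (metis L_def nth_equalityI)
  have df: "\<exists>i\<le>L. \<alpha> i \<noteq> \<beta> i" using i by (intro exI[of _ i]) (simp add: \<alpha>_def \<beta>_def)
  have "(mpow (Wm E \<tau>) L)$(\<alpha> 0)$(\<alpha> L) \<ge> 2"
    by (rule mpow_ge2[OF Wm_nonneg[OF tau] ca cb a0]) (use aL a0 df in auto)
  then show ?thesis using L aL by (intro exI[of _ "\<alpha> 0"] exI[of _ L]) auto
qed

definition dl :: "'n::finite \<Rightarrow> 'n \<Rightarrow> real^('n\<times>'n)" where
  "dl a b = (\<chi> p. (if p = (a,b) then 1 else 0) - (if p = (b,a) then 1 else 0))"

lemma dl_swap: "dl b a = - dl a b"
  by (auto simp: dl_def vec_eq_iff)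

fun wnu :: "'n::finite list \<Rightarrow> real^('n\<times>'n)" where
  "wnu [] = 0"
| "wnu [x] = 0"
| "wnu (x#y#r) = dl x y + wnu (y#r)"

lemma wnu_append: "p \<noteq> [] \<Longrightarrow> q \<noteq> [] \<Longrightarrow> wnu (p @ q) = wnu p + dl (last p) (hd q) + wnu q"
proof (induction p)
  case Nil then show ?case by simp
next
  case (Cons x p)
  show ?case
  proof (cases p)
    case Nil
    then show ?thesis using Cons.prems by (cases q) auto
  next
    case (Cons y r)
    then show ?thesis using Cons.IH Cons.prems by simp
  qed
qed

lemma wnu_append_tl: "p \<noteq> [] \<Longrightarrow> q \<noteq> [] \<Longrightarrow> last p = hd q \<Longrightarrow> wnu (p @ tl q) = wnu p + wnu q"
proof (cases q)
  case (Cons h t)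
  assume a: "p \<noteq> []" "last p = hd q"
  show ?thesis
  proof (cases t)
    case Nil then show ?thesis using Cons by simp
  next
    case (Cons y r)
    then show ?thesis using a \<open>q = h # t\<close> by (simp add: wnu_append)
  qed
qed simp

lemma wnu_nth: "wnu p = (\<Sum>i<length p - 1. dl (p!i) (p!Suc i))"
proof (induction p rule: wnu.induct)
  case (3 x y r)
  then show ?case by (simp add: sum.lessThan_Suc_shift del: sum.lessThan_Suc)
qed simp_all

definition cnu :: "'n::finite list \<Rightarrow> real^('n\<times>'n)" where
  "cnu vs = wnu (vs @ [hd vs])"

lemma cnu_nth:
  assumes "vs \<noteq> []" shows "cnu vs = (\<Sum>i<length vs. dl (vs!i) (vs!(Suc i mod length vs)))"
proof -
  have "cnu vs = (\<Sum>i<length vs. dl ((vs @ [hd vs])!i) ((vs @ [hd vs])!Suc i))"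
    by (simp add: cnu_def wnu_nth)
  also have "\<dots> = (\<Sum>i<length vs. dl (vs!i) (vs!(Suc i mod length vs)))"
  proof (rule sum.cong)
    fix i assume "i \<in> {..<length vs}"
    then have i: "i < length vs" by simp
    show "dl ((vs @ [hd vs])!i) ((vs @ [hd vs])!Suc i) = dl (vs!i) (vs!(Suc i mod length vs))"
    proof (cases "Suc i < length vs")
      case True then show ?thesis using i by (simp add: nth_append)
    next
      case False
      then have "Suc i = length vs" using i by simp
      then show ?thesis using i assms by (simp add: nth_append hd_conv_nth)
    qed
  qed simp
  finally show ?thesis .
qed

lemma cwalk_succ: "cwalk E vs \<longleftrightarrow> vs \<noteq> [] \<and> successively E (vs @ [hd vs])"
proof (cases "vs = []")
  case False
  have "(\<forall>i<length vs. E (vs!i) (vs!(Suc i mod length vs))) \<longleftrightarrow>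
        (\<forall>i. Suc i < length (vs @ [hd vs]) \<longrightarrow> E ((vs @ [hd vs])!i) ((vs @ [hd vs])!Suc i))"
  proof (intro iffI allI impI)
    fix i assume h: "\<forall>i<length vs. E (vs!i) (vs!(Suc i mod length vs))" and i: "Suc i < length (vs @ [hd vs])"
    then have i': "i < length vs" by simp
    show "E ((vs @ [hd vs])!i) ((vs @ [hd vs])!Suc i)"
    proof (cases "Suc i < length vs")
      case True then show ?thesis using h[rule_format, OF i'] by (simp add: nth_append)
    next
      case False
      then have "Suc i = length vs" using i' by simp
      then show ?thesis using h[rule_format, OF i'] False \<open>vs \<noteq> []\<close> by (simp add: nth_append hd_conv_nth)
    qed
  next
    fix i assume h: "\<forall>i. Suc i < length (vs @ [hd vs]) \<longrightarrow> E ((vs @ [hd vs])!i) ((vs @ [hd vs])!Suc i)"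
      and i: "i < length vs"
    have hi: "E ((vs @ [hd vs])!i) ((vs @ [hd vs])!Suc i)" using h i by simp
    show "E (vs!i) (vs!(Suc i mod length vs))"
    proof (cases "Suc i < length vs")
      case True then show ?thesis using hi i by (simp add: nth_append)
    next
      case False
      then have "Suc i = length vs" using i by simp
      then have "Suc i mod length vs = 0" by simp
      then show ?thesis using hi i False \<open>vs \<noteq> []\<close> by (simp add: nth_append hd_conv_nth)
    qed
  qed
  then show ?thesis using False by (simp add: cwalk_def successively_conv_nth)
qed (simp add: cwalk_def)

lemma cnu_rotate1: "cnu (rotate1 vs) = cnu vs"
proof (cases vs)
  case (Cons a r)
  show ?thesis
  proof (cases r)
    case (Cons b r')
    have "cnu (rotate1 vs) = wnu ((b#r'@[a]) @ [b])" using \<open>vs = a#r\<close> Cons by (simp add: cnu_def)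
    also have "\<dots> = wnu (b#r'@[a]) + dl a b" by (subst wnu_append) auto
    also have "\<dots> = cnu vs" using \<open>vs = a#r\<close> Cons by (simp add: cnu_def)
    finally show ?thesis .
  qed (use Cons in simp)
qed simp

lemma cnu_rotate: "cnu (rotate n vs) = cnu vs"
  by (induction n) (simp_all add: rotate_Suc cnu_rotate1 del: rotate1.simps)

lemma cwalk_rotate1: "cwalk E vs \<Longrightarrow> cwalk E (rotate1 vs)"
proof (cases vs)
  case (Cons a r)
  assume w: "cwalk E vs"
  show ?thesis
  proof (cases r)
    case (Cons b r')
    have "successively E (a#b#r'@[a])" using w \<open>vs = a#r\<close> Cons by (simp add: cwalk_succ)
    then have "E a b" "successively E (b#r'@[a])" by auto
    then have "successively E ((b#r'@[a]) @ [b])"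
      by (subst successively_append_iff) auto
    then show ?thesis using \<open>vs = a#r\<close> Cons by (simp add: cwalk_succ)
  qed (use Cons w in simp)
qed simp

lemma cwalk_rotate: "cwalk E vs \<Longrightarrow> cwalk E (rotate n vs)"
  by (induction n) (simp_all add: rotate_Suc cwalk_rotate1 del: rotate1.simps)

lemma closed_to_cyc:
  assumes "successively E p" "length p \<ge> 2" "last p = hd p"
  shows "cwalk E (butlast p) \<and> hd (butlast p) = hd p \<and> cnu (butlast p) = wnu p"
proof -
  have bn: "butlast p \<noteq> []" using assms(2) by (cases p) auto
  have hb: "hd (butlast p) = hd p" using assms(2) by (cases p) auto
  have eq: "butlast p @ [hd (butlast p)] = p"
    using hb assms(3) bn by (metis append_butlast_last_id butlast.simps(1))
  show ?thesis using assms(1) bn hb eq by (simp add: cwalk_succ cnu_def)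
qed

lemma cnu_append:
  assumes "vs \<noteq> []" "ws \<noteq> []" "hd ws = hd vs"
  shows "cnu (vs @ ws) = cnu vs + cnu ws"
proof -
  have "cnu (vs @ ws) = wnu (vs @ (ws @ [hd vs]))" using assms by (simp add: cnu_def)
  also have "\<dots> = wnu vs + dl (last vs) (hd ws) + wnu (ws @ [hd ws])"
    using assms by (subst wnu_append) auto
  also have "\<dots> = cnu vs + cnu ws"
    using assms by (simp add: cnu_def wnu_append)
  finally show ?thesis .
qed

lemma cwalk_append:
  assumes "cwalk E vs" "cwalk E ws" "hd ws = hd vs"
  shows "cwalk E (vs @ ws)"
proof -
  have a: "vs \<noteq> []" "successively E (vs @ [hd vs])" "ws \<noteq> []" "successively E (ws @ [hd ws])"
    using assms by (auto simp: cwalk_succ)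
  then have "successively E vs" "E (last vs) (hd ws)" using assms(3)
    by (auto simp: successively_append_iff)
  then have "successively E (vs @ (ws @ [hd vs]))" using a assms(3)
    by (subst successively_append_iff) auto
  then show ?thesis using a by (simp add: cwalk_succ)
qed

definition pw :: "'a list \<Rightarrow> nat \<Rightarrow> 'a list" where
  "pw vs k = concat (replicate k vs)"

lemma pw_0[simp]: "pw vs 0 = []" and pw_Suc: "pw vs (Suc k) = vs @ pw vs k"
  by (simp_all add: pw_def)

lemma length_pw[simp]: "length (pw vs k) = k * length vs"
  by (induction k) (simp_all add: pw_Suc)

lemma nth_pw: "j < k * length vs \<Longrightarrow> pw vs k ! j = vs ! (j mod length vs)"
proof (induction k arbitrary: j)
  case (Suc k)
  show ?case
  proof (cases "j < length vs")
    case True then show ?thesis by (simp add: pw_Suc nth_append)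
  next
    case False
    then have "j - length vs < k * length vs" using Suc.prems by simp
    then show ?thesis using Suc.IH[of "j - length vs"] False
      by (simp add: pw_Suc nth_append mod_if)
  qed
qed simp

lemma hd_pw: "vs \<noteq> [] \<Longrightarrow> k > 0 \<Longrightarrow> hd (pw vs k) = hd vs"
  by (cases k) (simp_all add: pw_Suc)

lemma cnu_pw: "vs \<noteq> [] \<Longrightarrow> cnu (pw vs k) = real k *\<^sub>R cnu vs"
proof (induction k)
  case 0 then show ?case by (simp add: cnu_def)
next
  case (Suc k)
  show ?case
  proof (cases "k = 0")
    case True then show ?thesis by (simp add: pw_Suc)
  next
    case False
    have "pw vs k \<noteq> []" using False Suc.prems by (metis length_0_conv length_pw mult_is_0)
    then show ?thesis using Suc False
      by (simp add: pw_Suc cnu_append hd_pw algebra_simps)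
  qed
qed

lemma cwalk_pw:
  assumes "cwalk E vs" "k > 0" shows "cwalk E (pw vs k)"
proof -
  define L where "L = length vs"
  have L: "L > 0" using assms by (simp add: cwalk_def L_def)
  have "E (pw vs k ! i) (pw vs k ! (Suc i mod (k * L)))" if i: "i < k * L" for i
  proof -
    have kL: "k * L > 0" using i by (simp only: gr_implies_not0 neq0_conv)
    have "Suc i mod (k*L) < k * L" using kL by simp
    then have n2: "pw vs k ! (Suc i mod (k * L)) = vs ! (Suc i mod L)"
      by (simp add: nth_pw L_def mod_mod_cancel)
    have "E (vs ! (i mod L)) (vs ! (Suc (i mod L) mod L))"
      using assms(1) L unfolding cwalk_def L_def by simp
    then show ?thesis using i n2 by (simp add: nth_pw L_def mod_Suc_eq)
  qed
  moreover have "pw vs k \<noteq> []" using assms L by (metis L_def length_0_conv length_pw mult_is_0 not_less0 zero_less_iff_neq_zero)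
  ultimately show ?thesis by (simp add: cwalk_def L_def)
qed

lemma cnb_pw:
  assumes "cnb vs" "vs \<noteq> []" "k > 0" shows "cnb (pw vs k)"
proof -
  define L where "L = length vs"
  have L: "L > 0" using assms by (simp add: L_def)
  have "pw vs k ! (Suc (Suc i) mod (k * L)) \<noteq> pw vs k ! i" if i: "i < k * L" for i
  proof -
    have kL: "k * L > 0" using i by (simp only: gr_implies_not0 neq0_conv)
    have "Suc (Suc i) mod (k*L) < k * L" using kL by simp
    then have n2: "pw vs k ! (Suc (Suc i) mod (k * L)) = vs ! (Suc (Suc i) mod L)"
      by (simp add: nth_pw L_def mod_mod_cancel)
    have "vs ! (Suc (Suc (i mod L)) mod L) \<noteq> vs ! (i mod L)"
      using assms(1) L unfolding cnb_def L_def by simp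
    moreover have "Suc (Suc (i mod L)) mod L = Suc (Suc i) mod L" by (metis mod_Suc_eq)
    ultimately show ?thesis using i n2 by (simp add: nth_pw L_def)
  qed
  then show ?thesis by (simp add: cnb_def L_def)
qed

lemma reduce:
  fixes E :: "'n::finite \<Rightarrow> 'n \<Rightarrow> bool"
  assumes loop: "\<forall>v. \<not> E v v"
  shows "cwalk E vs \<Longrightarrow> cnu vs \<noteq> 0 \<Longrightarrow> \<exists>ws. cwalk E ws \<and> cnb ws \<and> cnu ws = cnu vs"
proof (induction "length vs" arbitrary: vs rule: less_induct)
  case less
  show ?case
  proof (cases "cnb vs")
    case True then show ?thesis using less.prems by blast
  next
    case False
    define L where "L = length vs"
    obtain i where i: "i < L" "vs!(Suc (Suc i) mod L) = vs!i"
      using False by (auto simp: cnb_def L_def)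
    have L0: "L \<noteq> 0" using less.prems by (simp add: cwalk_def L_def)
    have L1: "L \<noteq> 1"
    proof
      assume "L = 1"
      then have "E (vs!0) (vs!0)" using less.prems(1) by (auto simp: cwalk_def L_def)
      then show False using loop by blast
    qed
    have L2: "L \<noteq> 2"
    proof
      assume "L = 2"
      then have "\<exists>a b. vs = [a,b]" by (auto simp: L_def length_Suc_conv numeral_2_eq_2)
      then obtain a b where "vs = [a,b]" by blast
      then have "cnu vs = dl a b + dl b a" by (simp add: cnu_def)
      then have "cnu vs = 0" using dl_swap[of b a] by simp
      then show False using less.prems by simp
    qed
    have L3: "L \<ge> 3" using L0 L1 L2 by linarith
    define us where "us = rotate i vs"
    have lus: "length us = L" by (simp add: us_def L_def)
    have u0: "us!0 = vs!i" using i L0 by (simp add: us_def nth_rotate L_def)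
    have u2: "us!2 = vs!i"
    proof -
      have "us!2 = vs!((i + 2) mod L)" using L3 by (simp add: us_def nth_rotate L_def)
      also have "\<dots> = vs!i" using i(2) by simp
      finally show ?thesis .
    qed
    have wus: "cwalk E us" using less.prems by (simp add: us_def cwalk_rotate)
    have nus: "cnu us = cnu vs" by (simp add: us_def cnu_rotate)
    have "\<exists>x0 x1 x2 rest. us = x0 # x1 # x2 # rest"
      using lus L3 by (auto simp: Suc_le_length_iff numeral_3_eq_3)
    then obtain x0 x1 x2 rest where us: "us = x0 # x1 # x2 # rest" by blast
    have x2: "x2 = x0" using u0 u2 us by simp
    define ws where "ws = x0 # rest"
    have "cnu us = dl x0 x1 + dl x1 x0 + cnu ws" using us x2 by (simp add: cnu_def ws_def)
    then have nws: "cnu ws = cnu vs" using nus dl_swap[of x1 x0] by simp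
    have "successively E (x0 # x1 # x0 # rest @ [x0])" using wus us x2 by (simp add: cwalk_succ)
    then have "successively E (x0 # rest @ [x0])" by simp
    then have wws: "cwalk E ws" by (simp add: cwalk_succ ws_def)
    have "length ws < length vs" using lus us by (simp add: ws_def L_def)
    then show ?thesis using less.hyps[of ws] wws nws less.prems by auto
  qed
qed

lemma cyc_len3:
  assumes loop: "\<forall>v. \<not> E v v" and w: "cwalk E vs" and nb: "cnb vs"
  shows "length vs \<ge> 3"
proof -
  have "length vs \<noteq> 0" using w by (simp add: cwalk_def)
  moreover have "length vs \<noteq> 1"
  proof
    assume "length vs = 1"
    then have "E (vs!0) (vs!0)" using w by (auto simp: cwalk_def)
    then show False using loop by blast
  qed
  moreover have "length vs \<noteq> 2"
  proof
    assume "length vs = 2"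
    then show False using nb[unfolded cnb_def, rule_format, of 0] by simp
  qed
  ultimately show ?thesis by linarith
qed

lemma two_walks:
  fixes E :: "'n::finite \<Rightarrow> 'n \<Rightarrow> bool"
  assumes loop: "\<forall>v. \<not> E v v" and P1: "cwalk E P1" and P2: "cwalk E P2" and hd: "hd P2 = hd P1"
    and ind: "\<forall>p q::real. p *\<^sub>R cnu P1 + q *\<^sub>R cnu P2 = 0 \<longrightarrow> p = 0 \<and> q = 0"
  shows "\<exists>vs ws. length vs = length ws \<and> length vs \<ge> 2 \<and> cwalk E vs \<and> cwalk E ws \<and> cnb vs \<and> cnb ws
           \<and> vs!0 = ws!0 \<and> vs!1 = ws!1 \<and> vs \<noteq> ws"
proof -
  define \<nu>1 where "\<nu>1 = cnu P1"
  define \<nu>2 where "\<nu>2 = cnu P2"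
  have ne1: "P1 \<noteq> []" "P2 \<noteq> []" using P1 P2 by (auto simp: cwalk_def)
  have psi: "cwalk E (P1 @ pw P2 n) \<and> cnu (P1 @ pw P2 n) = \<nu>1 + real n *\<^sub>R \<nu>2" for n
  proof (cases "n = 0")
    case True then show ?thesis using P1 by (simp add: \<nu>1_def)
  next
    case False
    have h: "hd (pw P2 n) = hd P1" using False ne1 hd by (simp add: hd_pw)
    have nn: "pw P2 n \<noteq> []" using False ne1 by (metis length_0_conv length_pw mult_is_0)
    show ?thesis using cwalk_append[OF P1 cwalk_pw[OF P2] h] cnu_append[OF ne1(1) nn h] False
      by (simp add: cnu_pw ne1 \<nu>1_def \<nu>2_def)
  qed
  have nz: "\<nu>1 + real n *\<^sub>R \<nu>2 \<noteq> 0" for n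
    using ind[rule_format, of 1 "real n"] by (auto simp: \<nu>1_def \<nu>2_def)
  have "\<forall>n. \<exists>\<omega>. cwalk E \<omega> \<and> cnb \<omega> \<and> cnu \<omega> = \<nu>1 + real n *\<^sub>R \<nu>2"
  proof
    fix n
    show "\<exists>\<omega>. cwalk E \<omega> \<and> cnb \<omega> \<and> cnu \<omega> = \<nu>1 + real n *\<^sub>R \<nu>2"
      using reduce[where E=E, OF loop, of "P1 @ pw P2 n"] psi[of n] nz[of n] by metis
  qed
  then obtain f where f: "\<And>n. cwalk E (f n) \<and> cnb (f n) \<and> cnu (f n) = \<nu>1 + real n *\<^sub>R \<nu>2"
    by metis
  have len: "length (f n) \<ge> 3" for n using cyc_len3[where E=E, OF loop] f by blast
  define g where "g = (\<lambda>n. (f n ! 0, f n ! 1))"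
  define N where "N = CARD('n \<times> 'n)"
  have "\<not> inj_on g {..N}"
  proof
    assume "inj_on g {..N}"
    then have "card (g ` {..N}) = Suc N" by (simp add: card_image)
    moreover have "card (g ` {..N}) \<le> N" unfolding N_def by (rule card_mono) auto
    ultimately show False by simp
  qed
  then obtain n m where nm: "n \<noteq> m" "g n = g m" by (auto simp: inj_on_def)
  define Ln where "Ln = length (f n)"
  define Lm where "Lm = length (f m)"
  have Ln: "Ln \<ge> 3" "Lm \<ge> 3" using len by (simp_all add: Ln_def Lm_def)
  define vs where "vs = pw (f n) Lm"
  define ws where "ws = pw (f m) Ln"
  have lvs: "length vs = Lm * Ln" "length ws = Lm * Ln" by (simp_all add: vs_def ws_def Ln_def Lm_def)
  have fne: "f n \<noteq> []" "f m \<noteq> []" using Ln by (auto simp: Ln_def Lm_def)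
  have "3 * 3 \<le> Lm * Ln" using Ln by (intro mult_le_mono) auto
  then have pos: "0 < Lm * Ln" "1 < Lm * Ln" by linarith+
  have v0: "vs!0 = f n ! 0" "vs!1 = f n ! 1" using pos Ln
    by (simp_all add: vs_def nth_pw Ln_def[symmetric] mult.commute)
  have w0: "ws!0 = f m ! 0" "ws!1 = f m ! 1" using pos Ln
    by (simp_all add: ws_def nth_pw Lm_def[symmetric] mult.commute)
  have "vs \<noteq> ws"
  proof
    assume "vs = ws"
    then have "cnu vs = cnu ws" by simp
    then have "real Lm *\<^sub>R (\<nu>1 + real n *\<^sub>R \<nu>2) = real Ln *\<^sub>R (\<nu>1 + real m *\<^sub>R \<nu>2)"
      using f fne by (simp add: vs_def ws_def cnu_pw)
    then have "(real Lm - real Ln) *\<^sub>R cnu P1 + (real Lm * real n - real Ln * real m) *\<^sub>R cnu P2 = 0"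
      by (simp add: algebra_simps \<nu>1_def \<nu>2_def)
    then have "real Lm - real Ln = 0" "real Lm * real n - real Ln * real m = 0"
      using ind by blast+
    then have "real n = real m" using Ln by simp
    then show False using nm by simp
  qed
  then show ?thesis using lvs pos v0 w0 nm(2) f
    by (intro exI[of _ vs] exI[of _ ws])
       (auto simp: g_def vs_def ws_def cwalk_pw cnb_pw fne Ln)
qed

lemma path_exists:
  assumes "E\<^sup>*\<^sup>* u v" shows "\<exists>p. p \<noteq> [] \<and> hd p = u \<and> last p = v \<and> successively E p"
  using assms
proof (induction rule: rtranclp_induct)
  case base then show ?case by (intro exI[of _ "[u]"]) auto
next
  case (step y z)
  then obtain p where p: "p \<noteq> []" "hd p = u" "last p = y" "successively E p" by blast
  then have "successively E (p @ [z])" using step by (simp add: successively_append_iff)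
  then show ?case using p by (intro exI[of _ "p @ [z]"]) auto
qed

lemma sum_rot:
  fixes h :: "nat \<Rightarrow> 'a::comm_monoid_add"
  shows "(\<Sum>i<L. h (Suc i mod L)) = (\<Sum>i<L. h i)"
proof (cases L)
  case (Suc L')
  have "(\<Sum>i<Suc L'. h (Suc i mod Suc L')) = (\<Sum>i<L'. h (Suc i mod Suc L')) + h 0" by simp
  also have "(\<Sum>i<L'. h (Suc i mod Suc L')) = (\<Sum>i<L'. h (Suc i))" by (intro sum.cong) auto
  also have "(\<Sum>i<L'. h (Suc i)) + h 0 = (\<Sum>i<Suc L'. h i)"
    by (simp only: sum.lessThan_Suc_shift add.commute)
  finally show ?thesis using Suc by simp
qed simp

lemma cyc_in_span:
  fixes E :: "'n::finite \<Rightarrow> 'n \<Rightarrow> bool"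
  assumes sc: "strongly_connected E"
    and c: "c \<noteq> []" "\<forall>i<length c. und_adj E (c!i) (c!(Suc i mod length c))"
  shows "cnu c \<in> span {wnu p | p. p \<noteq> [] \<and> successively E p \<and> hd p = x \<and> last p = x}"
proof -
  define V where "V = {wnu p | p. p \<noteq> [] \<and> successively E p \<and> hd p = x \<and> last p = x}"
  have pe: "\<exists>p. p \<noteq> [] \<and> hd p = u \<and> last p = v \<and> successively E p" for u v
    using sc path_exists[of E u v] by (simp add: strongly_connected_def)
  define Ap where "Ap = (\<lambda>u. SOME p. p \<noteq> [] \<and> hd p = x \<and> last p = u \<and> successively E p)"
  define Bp where "Bp = (\<lambda>u. SOME p. p \<noteq> [] \<and> hd p = u \<and> last p = x \<and> successively E p)"
  have A: "Ap u \<noteq> [] \<and> hd (Ap u) = x \<and> last (Ap u) = u \<and> successively E (Ap u)" for u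
    unfolding Ap_def by (rule someI_ex) (rule pe)
  have B: "Bp u \<noteq> [] \<and> hd (Bp u) = u \<and> last (Bp u) = x \<and> successively E (Bp u)" for u
    unfolding Bp_def by (rule someI_ex) (rule pe)
  define \<phi> where "\<phi> = (\<lambda>u. wnu (Ap u))"
  define \<psi> where "\<psi> = (\<lambda>u v. dl u v + \<phi> u - \<phi> v)"
  have psi_arc: "\<psi> u v \<in> span V" if e: "E u v" for u v
  proof -
    have s1: "successively E (Ap u @ Bp v)" using A[of u] B[of v] e
      by (simp add: successively_append_iff)
    have m1: "wnu (Ap u @ Bp v) \<in> V" unfolding V_def
      using A[of u] B[of v] s1 by (intro CollectI exI[of _ "Ap u @ Bp v"]) auto
    have w1: "wnu (Ap u @ Bp v) = \<phi> u + dl u v + wnu (Bp v)"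
      using A[of u] B[of v] by (simp add: wnu_append \<phi>_def)
    have m2: "wnu (Ap v @ tl (Bp v)) \<in> V"
    proof (cases "tl (Bp v) = []")
      case True
      then have "Bp v = [v]" using B[of v] by (metis list.collapse)
      then have "v = x" using B[of v] by simp
      then show ?thesis unfolding V_def using A[of v] True by auto
    next
      case False
      obtain t where t: "Bp v = v # t" using B[of v] by (metis list.collapse)
      then have "successively E (v # t)" using B[of v] by simp
      then have "successively E t" "E v (hd t)" using False t by (auto simp: successively_Cons)
      then have "successively E (Ap v @ tl (Bp v))" using A[of v] t False
        by (simp add: successively_append_iff)
      moreover have "last (Ap v @ tl (Bp v)) = x" using B[of v] t False by (simp add: last_ConsR)
      ultimately show ?thesis unfolding V_def using A[of v] by auto
    qed
    have w2: "wnu (Ap v @ tl (Bp v)) = \<phi> v + wnu (Bp v)"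
      using A[of v] B[of v] by (simp add: wnu_append_tl \<phi>_def)
    have "\<psi> u v = wnu (Ap u @ Bp v) - wnu (Ap v @ tl (Bp v))"
      by (simp add: w1 w2 \<psi>_def algebra_simps)
    then show ?thesis using m1 m2 by (simp add: span_diff span_base)
  qed
  have psi_adj: "\<psi> u v \<in> span V" if "und_adj E u v" for u v
  proof (cases "E u v")
    case True then show ?thesis by (rule psi_arc)
  next
    case False
    then have "E v u" using that by (simp add: und_adj_def)
    then have "\<psi> v u \<in> span V" by (rule psi_arc)
    moreover have "\<psi> u v = - \<psi> v u" using dl_swap[of v u] by (simp add: \<psi>_def)
    ultimately show ?thesis by (simp add: span_neg)
  qed
  define L where "L = length c"
  have "cnu c = (\<Sum>i<L. dl (c!i) (c!(Suc i mod L)))" using c by (simp add: cnu_nth L_def)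
  also have "\<dots> = (\<Sum>i<L. \<psi> (c!i) (c!(Suc i mod L))) - (\<Sum>i<L. \<phi> (c!i)) + (\<Sum>i<L. \<phi> (c!(Suc i mod L)))"
    by (simp add: \<psi>_def sum.distrib sum_subtractf)
  also have "(\<Sum>i<L. \<phi> (c!(Suc i mod L))) = (\<Sum>i<L. \<phi> (c!i))"
    by (rule sum_rot[of "\<lambda>i. \<phi> (c!i)"])
  finally have "cnu c = (\<Sum>i<L. \<psi> (c!i) (c!(Suc i mod L)))" by simp
  also have "\<dots> \<in> span V" using c(2) by (intro span_sum psi_adj) (simp add: L_def)
  finally show ?thesis by (simp add: V_def)
qed

lemma indep_from_span:
  fixes V :: "'v::real_vector set"
  assumes h1: "a \<in> span V" "b \<in> span V"
    and ind: "\<forall>p q::real. p *\<^sub>R a + q *\<^sub>R b = 0 \<longrightarrow> p = 0 \<and> q = 0"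
  shows "\<exists>u\<in>V. \<exists>w\<in>V. \<forall>p q::real. p *\<^sub>R u + q *\<^sub>R w = 0 \<longrightarrow> p = 0 \<and> q = 0"
proof (rule ccontr)
  assume na: "\<not> ?thesis"
  have a0: "a \<noteq> 0" using ind[rule_format, of 1 0] by auto
  show False
  proof (cases "\<exists>v0\<in>V. v0 \<noteq> 0")
    case False
    then have "V \<subseteq> {0}" by auto
    then have "span V \<subseteq> span {0}" by (rule span_mono)
    then have "a = 0" using h1 by auto
    then show False using a0 by simp
  next
    case True
    then obtain v0 where v0: "v0 \<in> V" "v0 \<noteq> 0" by blast
    have "w \<in> span {v0}" if w: "w \<in> V" for w
    proof -
      obtain p q where pq: "p *\<^sub>R v0 + q *\<^sub>R w = 0" "\<not> (p = 0 \<and> q = 0)"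
        using na v0 w by blast
      have q: "q \<noteq> 0"
      proof
        assume "q = 0"
        then have "p = 0" using pq v0 by simp
        then show False using pq \<open>q = 0\<close> by simp
      qed
      have "w = (- p / q) *\<^sub>R v0"
      proof -
        have "q *\<^sub>R w = - (p *\<^sub>R v0)" using pq by (simp add: eq_neg_iff_add_eq_0 add.commute)
        then have "w = inverse q *\<^sub>R (- (p *\<^sub>R v0))" using q by (metis scaleR_left_imp_eq scaleR_scaleR right_inverse scaleR_one)
        then show ?thesis by (simp add: divide_inverse_commute)
      qed
      then show ?thesis using span_scale[OF span_base[OF singletonI[of v0]], of "-p/q"] by simp
    qed
    then have "V \<subseteq> span {v0}" by blast
    then have sp: "span V \<subseteq> span {v0}" by (simp add: span_minimal subspace_span)
    have "a \<in> span {v0}" "b \<in> span {v0}" using h1 sp by blast+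
    then have "a \<in> range (\<lambda>k. k *\<^sub>R v0)" "b \<in> range (\<lambda>k. k *\<^sub>R v0)"
      by (simp_all only: span_singleton)
    then obtain ka kb where "a = ka *\<^sub>R v0" "b = kb *\<^sub>R v0" by blast
    then have "kb *\<^sub>R a + (- ka) *\<^sub>R b = 0" by simp
    then have "kb = 0" "ka = 0" using ind[rule_format, of kb "-ka"] by auto
    then show False using a0 \<open>a = ka *\<^sub>R v0\<close> by simp
  qed
qed

lemma indep_closed_walks:
  fixes E :: "'n::finite \<Rightarrow> 'n \<Rightarrow> bool"
  assumes sc: "strongly_connected E"
    and c1: "c1 \<noteq> []" "\<forall>i<length c1. und_adj E (c1!i) (c1!(Suc i mod length c1))"
    and c2: "c2 \<noteq> []" "\<forall>i<length c2. und_adj E (c2!i) (c2!(Suc i mod length c2))"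
    and ind: "\<forall>p q::real. p *\<^sub>R cnu c1 + q *\<^sub>R cnu c2 = 0 \<longrightarrow> p = 0 \<and> q = 0"
  shows "\<exists>P1 P2. cwalk E P1 \<and> cwalk E P2 \<and> hd P2 = hd P1 \<and>
           (\<forall>p q::real. p *\<^sub>R cnu P1 + q *\<^sub>R cnu P2 = 0 \<longrightarrow> p = 0 \<and> q = 0)"
proof -
  fix x :: 'n
  define V where "V = {wnu p | p. p \<noteq> [] \<and> successively E p \<and> hd p = x \<and> last p = x}"
  have "cnu c1 \<in> span V" "cnu c2 \<in> span V"
    unfolding V_def by (intro cyc_in_span[OF sc] c1 c2)+
  from indep_from_span[OF this ind] obtain u w where uw: "u \<in> V" "w \<in> V"
    and ind2: "\<forall>p q::real. p *\<^sub>R u + q *\<^sub>R w = 0 \<longrightarrow> p = 0 \<and> q = 0" by blast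
  have conv: "\<exists>P. cwalk E P \<and> hd P = x \<and> cnu P = y" if yV: "y \<in> V" and y0: "y \<noteq> 0" for y
  proof -
    obtain p where p: "y = wnu p" "p \<noteq> []" "successively E p" "hd p = x" "last p = x"
      using yV unfolding V_def by blast
    have "length p \<ge> 2"
    proof (rule ccontr)
      assume "\<not> length p \<ge> 2"
      then obtain z where "p = [z]" using p(2) by (cases p; cases "tl p") auto
      then show False using p y0 by simp
    qed
    from closed_to_cyc[OF p(3) this] p show ?thesis by (intro exI[of _ "butlast p"]) auto
  qed
  have "u \<noteq> 0" using ind2[rule_format, of 1 0] by auto
  then obtain P1 where P1: "cwalk E P1" "hd P1 = x" "cnu P1 = u" using conv uw by blast
  have "w \<noteq> 0" using ind2[rule_format, of 0 1] by auto
  then obtain P2 where P2: "cwalk E P2" "hd P2 = x" "cnu P2 = w" using conv uw by blast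
  show ?thesis using P1 P2 ind2 by (intro exI[of _ P1] exI[of _ P2]) auto
qed

definition cA :: "'a list \<Rightarrow> int \<Rightarrow> 'a" where
  "cA a k = a ! nat (k mod int (length a))"

lemma cA_eq:
  assumes "distinct a" "a \<noteq> []"
  shows "cA a x = cA a y \<longleftrightarrow> int (length a) dvd (x - y)"
proof -
  define m where "m = int (length a)"
  have m: "m > 0" using assms by (simp add: m_def)
  have lx: "nat (x mod m) < length a" "nat (y mod m) < length a"
    using m by (simp_all add: m_def nat_less_iff)
  have "cA a x = cA a y \<longleftrightarrow> nat (x mod m) = nat (y mod m)"
    unfolding cA_def m_def[symmetric] using nth_eq_iff_index_eq[OF assms(1) lx] by simp
  also have "\<dots> \<longleftrightarrow> x mod m = y mod m" using m by (auto simp: nat_eq_iff2)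
  also have "\<dots> \<longleftrightarrow> m dvd (x - y)" by (rule mod_eq_dvd_iff)
  finally show ?thesis by (simp add: m_def)
qed

lemma cA_nat: "cA a (int x) = a ! (x mod length a)"
  by (simp add: cA_def zmod_int[symmetric])

lemma cA_dvd: "int (length a) dvd (x - y) \<Longrightarrow> cA a x = cA a y"
  by (simp add: cA_def mod_eq_dvd_iff[symmetric])

lemma cyc_sub_equiv:
  assumes a: "distinct a" "length a \<ge> 3" and b: "distinct b" "length b \<ge> 3"
   and ed: "\<forall>j<length b. \<exists>i::int. (b!j = cA a i \<and> b!(Suc j mod length b) = cA a (i+1))
                                  \<or> (b!j = cA a (i+1) \<and> b!(Suc j mod length b) = cA a i)"
  shows "cycle_equiv a b"
proof -
  define m where "m = length a"
  define l where "l = length b"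
  have m3: "m \<ge> 3" and l3: "l \<ge> 3" using a b by (simp_all add: m_def l_def)
  have ane: "a \<noteq> []" using a by auto
  note eqA = cA_eq[OF a(1) ane, folded m_def]
  have nxt: "cA a x = cA a y \<Longrightarrow> cA a (x + c) = cA a (y + c)" for x y c
    using eqA by (metis add_diff_cancel_right)
  obtain s d where sd: "d = 1 \<or> d = -1" "b!0 = cA a s" "b!1 = cA a (s + d)"
  proof -
    obtain i where "(b!0 = cA a i \<and> b!(Suc 0 mod l) = cA a (i+1)) \<or> (b!0 = cA a (i+1) \<and> b!(Suc 0 mod l) = cA a i)"
    proof -
      have "0 < length b" using l3 unfolding l_def by linarith
      then show ?thesis using ed that unfolding l_def by blast
    qed
    moreover have "Suc 0 mod l = 1" using l3 by simp
    ultimately show ?thesis using that[of 1 i] that[of "-1" "i+1"] by auto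
  qed
  have main: "\<forall>k\<le>j. k < l \<longrightarrow> b!k = cA a (s + d * int k)" for j
  proof (induction j)
    case 0 then show ?case using sd by simp
  next
    case (Suc j)
    show ?case
    proof (intro allI impI)
      fix k assume k: "k \<le> Suc j" "k < l"
      show "b!k = cA a (s + d * int k)"
      proof (cases "k \<le> j")
        case True then show ?thesis using Suc.IH k by simp
      next
        case False
        then have kj: "k = Suc j" using k by simp
        show ?thesis
        proof (cases "j = 0")
          case True then show ?thesis using kj sd by simp
        next
          case False
          have bj: "b!j = cA a (s + d * int j)" using Suc.IH k kj by simp
          have bj1: "b!(j-1) = cA a (s + d * int (j-1))" using Suc.IH k kj by simp
          have ij: "int (j - 1) = int j - 1" using False by simp
          obtain i where ei: "(b!j = cA a i \<and> b!(Suc j mod l) = cA a (i+1)) \<or> (b!j = cA a (i+1) \<and> b!(Suc j mod l) = cA a i)"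
            using ed[rule_format, of j] k kj unfolding l_def by (meson Suc_lessD)
          have sj: "Suc j mod l = Suc j" using k kj by simp
          have opt: "b!(Suc j) = cA a (s + d * int j + 1) \<or> b!(Suc j) = cA a (s + d * int j - 1)"
          proof -
            from ei show ?thesis
            proof
              assume h: "b!j = cA a i \<and> b!(Suc j mod l) = cA a (i+1)"
              then have "cA a (i + 1) = cA a (s + d * int j + 1)" using bj nxt by metis
              then show ?thesis using h sj by simp
            next
              assume h: "b!j = cA a (i+1) \<and> b!(Suc j mod l) = cA a i"
              then have "cA a (i + 1 + (-1)) = cA a (s + d * int j + (-1))" using bj nxt by metis
              then show ?thesis using h sj by simp
            qed
          qed
          have ne: "b!(Suc j) \<noteq> b!(j-1)"
            using b(1) k kj False by (simp add: l_def nth_eq_iff_index_eq)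
          from sd(1) show ?thesis
          proof
            assume d: "d = 1"
            then have "cA a (s + d * int j - 1) = b!(j-1)" using bj1 ij by (simp add: algebra_simps)
            then show ?thesis using opt ne d kj by (auto simp: algebra_simps)
          next
            assume d: "d = -1"
            then have "cA a (s + d * int j + 1) = b!(j-1)" using bj1 ij by (simp add: algebra_simps)
            then show ?thesis using opt ne d kj by (auto simp: algebra_simps)
          qed
        qed
      qed
    qed
  qed
  then have bk: "b!k = cA a (s + d * int k)" if "k < l" for k using that by blast
  have lm: "l \<le> m"
  proof (rule ccontr)
    assume "\<not> l \<le> m"
    then have "m < l" by simp
    then have "b!m = cA a (s + d * int m)" by (rule bk)
    also have "\<dots> = cA a s" using eqA by simp
    also have "\<dots> = b!0" using sd by simp
    finally have "b!m = b!0" .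
    moreover have "b!m \<noteq> b!0" using b(1) \<open>m < l\<close> m3
      by (subst nth_eq_iff_index_eq) (auto simp: l_def)
    ultimately show False by simp
  qed
  have ml: "m \<le> l"
  proof (rule ccontr)
    assume "\<not> m \<le> l"
    then have lm': "l < m" by simp
    have l1: "Suc (l - 1) mod l = 0" using l3 by simp
    obtain i where ei: "(b!(l-1) = cA a i \<and> b!0 = cA a (i+1)) \<or> (b!(l-1) = cA a (i+1) \<and> b!0 = cA a i)"
    proof -
      have "l - 1 < length b" using l3 unfolding l_def by linarith
      then have "\<exists>i. (b!(l-1) = cA a i \<and> b!(Suc (l-1) mod l) = cA a (i+1)) \<or> (b!(l-1) = cA a (i+1) \<and> b!(Suc (l-1) mod l) = cA a i)"
        using ed unfolding l_def by blast
      then show ?thesis using that l1 by metis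
    qed
    have bl: "b!(l-1) = cA a (s + d * (int l - 1))" using bk[of "l-1"] l3 by (simp add: of_nat_diff)
    have b0: "b!0 = cA a s" using sd by simp
    have "int m dvd (d * (int l - 1) + 1) \<or> int m dvd (d * (int l - 1) - 1)"
      using ei
    proof
      assume h: "b!(l-1) = cA a i \<and> b!0 = cA a (i+1)"
      then have "cA a (s + d * (int l - 1)) = cA a i" "cA a s = cA a (i + 1)" using bl b0 by auto
      then have "int m dvd (s + d * (int l - 1) - i)" "int m dvd (s - (i + 1))" by (simp_all add: eqA)
      then have "int m dvd ((s + d * (int l - 1) - i) - (s - (i + 1)))" by (rule dvd_diff)
      then show ?thesis by (simp add: algebra_simps)
    next
      assume h: "b!(l-1) = cA a (i+1) \<and> b!0 = cA a i"
      then have "cA a (s + d * (int l - 1)) = cA a (i + 1)" "cA a s = cA a i" using bl b0 by auto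
      then have "int m dvd (s + d * (int l - 1) - (i + 1))" "int m dvd (s - i)" by (simp_all add: eqA)
      then have "int m dvd ((s + d * (int l - 1) - (i + 1)) - (s - i))" by (rule dvd_diff)
      then show ?thesis by (simp add: algebra_simps)
    qed
    then have "int m dvd int l \<or> int m dvd (int l - 2)"
    proof (cases "d = 1")
      case True
      then have "d * (int l - 1) + 1 = int l" "d * (int l - 1) - 1 = int l - 2" by simp_all
      then show ?thesis using \<open>int m dvd (d * (int l - 1) + 1) \<or> int m dvd (d * (int l - 1) - 1)\<close> by metis
    next
      case False
      then have "d = -1" using sd(1) by simp
      then have "d * (int l - 1) + 1 = - (int l - 2)" "d * (int l - 1) - 1 = - int l" by simp_all
      then show ?thesis using \<open>int m dvd (d * (int l - 1) + 1) \<or> int m dvd (d * (int l - 1) - 1)\<close>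
        by (metis dvd_minus_iff)
    qed
    moreover have "\<not> int m dvd int l" using zdvd_imp_le[of "int m" "int l"] lm' l3 by auto
    moreover have "\<not> int m dvd (int l - 2)" using zdvd_imp_le[of "int m" "int l - 2"] lm' l3 by auto
    ultimately show False by blast
  qed
  have lml: "l = m" using lm ml by simp
  from sd(1) show ?thesis
  proof
    assume d: "d = 1"
    define k where "k = nat (s mod int m)"
    have "b = rotate k a"
    proof (rule nth_equalityI)
      show "length b = length (rotate k a)" using lml by (simp add: l_def m_def)
      fix j assume j: "j < length b"
      have "rotate k a ! j = a ! ((k + j) mod length a)" using j lml by (simp add: nth_rotate l_def m_def)
      also have "\<dots> = cA a (int (k + j))" by (rule cA_nat[symmetric])
      also have "\<dots> = cA a (s + d * int j)"
        using m3 d by (intro cA_dvd) (simp add: k_def m_def[symmetric] mod_eq_dvd_iff[symmetric] mod_add_left_eq)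
      finally show "b ! j = rotate k a ! j" using bk[of j] j by (simp add: l_def)
    qed
    then show ?thesis by (auto simp: cycle_equiv_def)
  next
    assume d: "d = -1"
    define k where "k = nat ((s + 1) mod int m)"
    have "b = rev (rotate k a)"
    proof (rule nth_equalityI)
      show "length b = length (rev (rotate k a))" using lml by (simp add: l_def m_def)
      fix j assume j: "j < length b"
      have jm: "j < m" using j lml by (simp add: l_def)
      have "rev (rotate k a) ! j = rotate k a ! (m - Suc j)" using jm by (simp add: rev_nth m_def)
      also have "\<dots> = a ! ((k + (m - Suc j)) mod length a)" using jm by (simp add: nth_rotate m_def)
      also have "\<dots> = cA a (int (k + (m - Suc j)))" by (rule cA_nat[symmetric])
      also have "\<dots> = cA a (s + d * int j)"
      proof (intro cA_dvd)
        have e1: "int (k + (m - Suc j)) = (s + 1) mod int m + int m - 1 - int j"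
          using jm m3 by (simp add: k_def of_nat_diff)
        have "int m dvd ((s + 1) mod int m - (s + 1))" by (simp add: mod_eq_dvd_iff[symmetric])
        then have "int m dvd ((s + 1) mod int m - (s + 1) + int m)" by simp
        moreover have "int (k + (m - Suc j)) - (s + d * int j) = (s + 1) mod int m - (s + 1) + int m"
          using e1 d by simp
        ultimately show "int (length a) dvd (int (k + (m - Suc j)) - (s + d * int j))"
          unfolding m_def by metis
      qed
      finally show "b ! j = rev (rotate k a) ! j" using bk[of j] j by (simp add: l_def)
    qed
    then show ?thesis by (auto simp: cycle_equiv_def)
  qed
qed

lemma dl_comp: "dl a b $ (u,v) = (if (u,v) = (a,b) then 1 else 0) - (if (u,v) = (b,a) then 1 else 0)"
  by (simp add: dl_def)

lemma suc2_mod: "i < L \<Longrightarrow> L \<ge> 3 \<Longrightarrow> Suc (Suc i) mod L \<noteq> i"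
proof -
  assume a: "i < L" "L \<ge> 3"
  show ?thesis
  proof (cases "Suc (Suc i) < L")
    case True then show ?thesis by simp
  next
    case False
    then have "Suc (Suc i) = L \<or> Suc (Suc i) = Suc L" using a by linarith
    then show ?thesis
    proof
      assume h: "Suc (Suc i) = L"
      then have "Suc (Suc i) mod L = 0" by simp
      then show ?thesis using h a by simp
    next
      assume h: "Suc (Suc i) = Suc L"
      then have "Suc (Suc i) mod L = 1" using a by (simp add: mod_Suc)
      then show ?thesis using h a by simp
    qed
  qed
qed

lemma cyc_entry:
  assumes c: "is_cycle E c" and i: "i < length c"
  shows "cnu c $ (c!i, c!(Suc i mod length c)) = 1"
proof -
  define L where "L = length c"
  have L3: "L \<ge> 3" and dc: "distinct c" using c by (auto simp: is_cycle_def L_def)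
  have ne: "c \<noteq> []" using L3 L_def by auto
  have iL: "i < L" using i by (simp add: L_def)
  have trm: "dl (c!j) (c!(Suc j mod L)) $ (c!i, c!(Suc i mod L)) = (if j = i then 1 else 0)"
    if j: "j < L" for j
  proof -
    have sj: "Suc j mod L < L" "Suc i mod L < L" using L3 by simp_all
    have e1: "(c!i = c!j) = (i = j)" using dc iL j by (simp add: L_def nth_eq_iff_index_eq)
    have e2: "(c!i = c!(Suc j mod L)) = (i = Suc j mod L)" using dc iL sj by (simp add: L_def nth_eq_iff_index_eq)
    have e3: "(c!(Suc i mod L) = c!j) = (Suc i mod L = j)" using dc j sj by (simp add: L_def nth_eq_iff_index_eq)
    have no: "\<not> (i = Suc j mod L \<and> Suc i mod L = j)"
    proof
      assume h: "i = Suc j mod L \<and> Suc i mod L = j"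
      then have "i = Suc (Suc i mod L) mod L" by metis
      also have "\<dots> = Suc (Suc i) mod L" by (simp add: mod_Suc_eq)
      finally show False using suc2_mod[OF iL L3] by simp
    qed
    show ?thesis using e1 e2 e3 no by (auto simp: dl_comp)
  qed
  have "cnu c $ (c!i, c!(Suc i mod L)) = (\<Sum>j<L. dl (c!j) (c!(Suc j mod L)) $ (c!i, c!(Suc i mod L)))"
    using ne by (simp add: cnu_nth sum_component L_def)
  also have "\<dots> = (\<Sum>j<L. if j = i then 1 else 0)" by (intro sum.cong) (simp_all add: trm)
  also have "\<dots> = 1" using iL by simp
  finally show ?thesis by (simp add: L_def)
qed

lemma cyc_supp:
  assumes ne: "c \<noteq> []" and nz: "cnu c $ (u,v) \<noteq> 0"
  shows "\<exists>i<length c. (u = c!i \<and> v = c!(Suc i mod length c)) \<or> (u = c!(Suc i mod length c) \<and> v = c!i)"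
proof (rule ccontr)
  assume h: "\<not> ?thesis"
  have "cnu c $ (u,v) = (\<Sum>j<length c. dl (c!j) (c!(Suc j mod length c)) $ (u,v))"
    using ne by (simp add: cnu_nth sum_component)
  also have "\<dots> = 0"
  proof (intro sum.neutral ballI)
    fix j assume "j \<in> {..<length c}"
    then have "\<not> ((u = c!j \<and> v = c!(Suc j mod length c)) \<or> (u = c!(Suc j mod length c) \<and> v = c!j))"
      using h by blast
    then have n1: "((u,v) = (c!j, c!(Suc j mod length c))) = False"
      and n2: "((u,v) = (c!(Suc j mod length c), c!j)) = False" by blast+
    show "dl (c!j) (c!(Suc j mod length c)) $ (u,v) = 0" by (simp only: dl_comp n1 n2 if_False diff_self)
  qed
  finally show False using nz by simp
qed

lemma cyc_indep:
  fixes E :: "'n::finite \<Rightarrow> 'n \<Rightarrow> bool"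
  assumes c1: "is_cycle E c1" and c2: "is_cycle E c2" and neq: "\<not> cycle_equiv c1 c2"
  shows "\<forall>p q::real. p *\<^sub>R cnu c1 + q *\<^sub>R cnu c2 = 0 \<longrightarrow> p = 0 \<and> q = 0"
proof (intro allI impI)
  fix p q :: real
  assume pq: "p *\<^sub>R cnu c1 + q *\<^sub>R cnu c2 = 0"
  have l1: "length c1 \<ge> 3" "distinct c1" and l2: "length c2 \<ge> 3" "distinct c2"
    using c1 c2 by (auto simp: is_cycle_def)
  have comp: "p * cnu c1 $ e + q * cnu c2 $ e = 0" for e
    using arg_cong[OF pq, of "\<lambda>v. v $ e"] by simp
  have "0 < length c1" using l1 by linarith
  then have e1: "cnu c1 $ (c1!0, c1!(Suc 0 mod length c1)) = 1" by (rule cyc_entry[OF c1])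
  have e2: "cnu c2 $ (c2!j, c2!(Suc j mod length c2)) = 1" if "j < length c2" for j
    using cyc_entry[OF c2 that] .
  show "p = 0 \<and> q = 0"
  proof (cases "q = 0")
    case True
    then show ?thesis using comp[of "(c1!0, c1!(Suc 0 mod length c1))"] e1 by simp
  next
    case False
    have p0: "p \<noteq> 0"
    proof
      assume "p = 0"
      moreover have "0 < length c2" using l2 by linarith
      ultimately show False using comp[of "(c2!0, c2!(Suc 0 mod length c2))"] e2[of 0] False by simp
    qed
    have "\<forall>j<length c2. \<exists>i::int. (c2!j = cA c1 i \<and> c2!(Suc j mod length c2) = cA c1 (i+1))
                                  \<or> (c2!j = cA c1 (i+1) \<and> c2!(Suc j mod length c2) = cA c1 i)"
    proof (intro allI impI)
      fix j assume j: "j < length c2"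
      have "p * cnu c1 $ (c2!j, c2!(Suc j mod length c2)) = - q"
        using comp[of "(c2!j, c2!(Suc j mod length c2))"] e2[OF j] by simp
      then have "cnu c1 $ (c2!j, c2!(Suc j mod length c2)) \<noteq> 0" using False by auto
      then obtain i where i: "i < length c1"
        "(c2!j = c1!i \<and> c2!(Suc j mod length c2) = c1!(Suc i mod length c1)) \<or>
         (c2!j = c1!(Suc i mod length c1) \<and> c2!(Suc j mod length c2) = c1!i)"
        using cyc_supp[of c1] l1 by fastforce
      have a1: "c1!i = cA c1 (int i)" using i by (simp add: cA_nat)
      have a2: "c1!(Suc i mod length c1) = cA c1 (int i + 1)" using cA_nat[of c1 "Suc i"] by (simp add: add.commute)
      show "\<exists>i::int. (c2!j = cA c1 i \<and> c2!(Suc j mod length c2) = cA c1 (i+1))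
                    \<or> (c2!j = cA c1 (i+1) \<and> c2!(Suc j mod length c2) = cA c1 i)"
        using i(2) a1 a2 by (intro exI[of _ "int i"]) auto
    qed
    then have "cycle_equiv c1 c2" by (rule cyc_sub_equiv[OF l1(2) l1(1) l2(2) l2(1)])
    then show ?thesis using neq by simp
  qed
qed

theorem theorem4p12:
  fixes E :: "'n::finite \<Rightarrow> 'n \<Rightarrow> bool" and \<tau> :: real
  assumes "strongly_connected E"
    and "\<forall>v. \<not> E v v"
    and "0 < \<tau>" and "\<tau> \<le> 1"
    and "at_least_two_cycles E"
  shows "\<exists>t. 0 < t \<and> t < 1 / \<tau> \<and> det (M_tau (adj_matrix E) \<tau> t) = 0"
proof -
  note sc = assms(1) and loop = assms(2) and tau = assms(3,4)
  obtain c1 c2 where c1: "is_cycle E c1" and c2: "is_cycle E c2" and neq: "\<not> cycle_equiv c1 c2"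
    using assms(5) by (auto simp: at_least_two_cycles_def)
  have ind: "\<forall>p q::real. p *\<^sub>R cnu c1 + q *\<^sub>R cnu c2 = 0 \<longrightarrow> p = 0 \<and> q = 0"
    by (rule cyc_indep[OF c1 c2 neq])
  have cc: "c \<noteq> [] \<and> (\<forall>i<length c. und_adj E (c!i) (c!(Suc i mod length c)))" if "is_cycle E c" for c
    using that by (auto simp: is_cycle_def)
  obtain P1 P2 where P: "cwalk E P1" "cwalk E P2" "hd P2 = hd P1"
    and ind2: "\<forall>p q::real. p *\<^sub>R cnu P1 + q *\<^sub>R cnu P2 = 0 \<longrightarrow> p = 0 \<and> q = 0"
    using indep_closed_walks[OF sc, of c1 c2] cc[OF c1] cc[OF c2] ind by blast
  obtain vs ws where vw: "length vs = length ws" "length vs \<ge> 2" "cwalk E vs" "cwalk E ws" "cnb vs" "cnb ws"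
    "vs!0 = ws!0" "vs!1 = ws!1" "vs \<noteq> ws"
    using two_walks[OF loop P ind2] by blast
  obtain e K where eK: "K > 0" "(mpow (Wm E \<tau>) K)$e$e \<ge> 2"
    using cyc_to_pow[OF tau(2) vw] by blast
  obtain z \<mu> where z: "z \<noteq> 0" "Wm E \<tau> *v z = \<mu> *\<^sub>R z" "\<mu> > 1"
    using eig_from_pow[OF Wm_nonneg[OF tau(2)] eK] by blast
  have "det (M_tau (adj_matrix E) \<tau> (1/\<mu>)) = 0"
    using e2k[OF z(2) z(1) tau(1)] z(3) tau(2) by simp
  moreover have "0 < 1/\<mu>" using z(3) by simp
  moreover have "1/\<mu> < 1/\<tau>"
  proof -
    have "1/\<mu> < 1" using z(3) by simp
    also have "1 \<le> 1/\<tau>" using tau by simp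
    finally show ?thesis .
  qed
  ultimately show ?thesis by blast
qed

end
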